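(* If there is an $n$-vertex weighted graph $G=(V,w)$ with $\mathrm{cdim}(G)=k$, then $D_{\mathrm{lin}}(\mathrm{MINCUT}_n)\ge k$.
   Context: An $n$-vertex weighted graph $G=(V,w)$ is given by $w\in\mathbb{R}_{\ge0}^{\binom n2}$ on unordered pairs of distinct vertices; $E=\{e:w(e)>0\}$, $m=|E|$. For $\emptyset\ne X\subsetneq V$, $\Delta(X)$ is the set of edges of $E$ with exactly one endpoint in $X$; $\mathcal{M}(G)$ is the set of minimum-weight cuts; $\chi(S)\in\{0,1\}^m$ is the characteristic vector indexed by $E$; $\mathrm{cdim}(G)=\dim\,\mathrm{span}\{\chi(S):S\in\mathcal{M}(G)\}$. In $\mathrm{MINCUT}_n$ the input is an $n$-vertex weighted graph and the output is its minimum cut weight. A linear query $x\in\mathbb{R}^{\binom n2}$ is answered with $\langle x,w\rangle$ (adaptively). $D_{\mathrm{lin}}(\mathrm{MINCUT}_n)$ is the minimum over deterministic linear query algorithms correct on all $n$-vertex weighted graphs of the worst-case number of queries. *)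

theory Defs
  imports "HOL-Analysis.Analysis" "HOL-Library.Function_Algebras" "HOL-Library.Extended_Nat"
begin

text \<open>Vertices are 0..n-1. Unordered pairs of distinct vertices are encoded as (i,j) with i<j<n.\<close>

definition pairs :: "nat \<Rightarrow> (nat \<times> nat) set" where
  "pairs n = {(i, j). i < j \<and> j < n}"

definition wgraphs :: "nat \<Rightarrow> (nat \<times> nat \<Rightarrow> real) set" where
  "wgraphs n = {w. (\<forall>e \<in> pairs n. 0 \<le> w e) \<and> (\<forall>e. e \<notin> pairs n \<longrightarrow> w e = 0)}"

definition edges :: "nat \<Rightarrow> (nat \<times> nat \<Rightarrow> real) \<Rightarrow> (nat \<times> nat) set" where
  "edges n w = {e \<in> pairs n. w e > 0}"

definition cut :: "nat \<Rightarrow> (nat \<times> nat \<Rightarrow> real) \<Rightarrow> nat set \<Rightarrow> (nat \<times> nat) set" where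
  "cut n w X = {(i, j) \<in> edges n w. (i \<in> X) \<noteq> (j \<in> X)}"

definition cut_weight :: "nat \<Rightarrow> (nat \<times> nat \<Rightarrow> real) \<Rightarrow> nat set \<Rightarrow> real" where
  "cut_weight n w X = (\<Sum>e \<in> cut n w X. w e)"

definition vsets :: "nat \<Rightarrow> nat set set" where
  "vsets n = {X. X \<noteq> {} \<and> X \<subset> {..<n}}"

definition mincut :: "nat \<Rightarrow> (nat \<times> nat \<Rightarrow> real) \<Rightarrow> real" where
  "mincut n w = Min (cut_weight n w ` vsets n)"

definition min_cuts :: "nat \<Rightarrow> (nat \<times> nat \<Rightarrow> real) \<Rightarrow> (nat \<times> nat) set set" where
  "min_cuts n w = {cut n w X | X. X \<in> vsets n \<and> cut_weight n w X = mincut n w}"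

text \<open>Characteristic vector chi(S), indexed by E (extended by zero, since S is a subset of E).\<close>
definition chi :: "(nat \<times> nat) set \<Rightarrow> (nat \<times> nat \<Rightarrow> real)" where
  "chi S = (\<lambda>e. if e \<in> S then 1 else 0)"

definition cdim :: "nat \<Rightarrow> (nat \<times> nat \<Rightarrow> real) \<Rightarrow> nat" where
  "cdim n w = vector_space.dim (\<lambda>c f. (\<lambda>x. c * f x)) (chi ` min_cuts n w)"

text \<open>Deterministic adaptive linear query algorithms as decision trees:
  a node queries x and continues depending on the real answer <x,w>.\<close>
datatype qtree = Leaf real | Query "nat \<times> nat \<Rightarrow> real" "real \<Rightarrow> qtree"

definition inner_w :: "nat \<Rightarrow> (nat \<times> nat \<Rightarrow> real) \<Rightarrow> (nat \<times> nat \<Rightarrow> real) \<Rightarrow> real" where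
  "inner_w n x w = (\<Sum>e \<in> pairs n. x e * w e)"

primrec run_out :: "nat \<Rightarrow> qtree \<Rightarrow> (nat \<times> nat \<Rightarrow> real) \<Rightarrow> real" where
  "run_out n (Leaf r) w = r"
| "run_out n (Query x f) w = run_out n (f (inner_w n x w)) w"

primrec num_queries :: "nat \<Rightarrow> qtree \<Rightarrow> (nat \<times> nat \<Rightarrow> real) \<Rightarrow> nat" where
  "num_queries n (Leaf r) w = 0"
| "num_queries n (Query x f) w = Suc (num_queries n (f (inner_w n x w)) w)"

definition correct_mincut :: "nat \<Rightarrow> qtree \<Rightarrow> bool" where
  "correct_mincut n A = (\<forall>w \<in> wgraphs n. run_out n A w = mincut n w)"

definition D_lin_mincut :: "nat \<Rightarrow> enat" where
  "D_lin_mincut n = (INF A \<in> {A. correct_mincut n A}. SUP w \<in> wgraphs n. enat (num_queries n A w))"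

end

theory Submission
  imports Defs
begin

abbreviation fsc :: "real \<Rightarrow> (nat \<times> nat \<Rightarrow> real) \<Rightarrow> (nat \<times> nat \<Rightarrow> real)" where
  "fsc \<equiv> (\<lambda>c f. (\<lambda>x. c * f x))"

interpretation fv: vector_space fsc
  by unfold_locales (auto simp: fun_eq_iff algebra_simps)

definition restr :: "(nat \<times> nat) set \<Rightarrow> (nat \<times> nat \<Rightarrow> real) \<Rightarrow> (nat \<times> nat \<Rightarrow> real)" where
  "restr P v = (\<lambda>e. if e \<in> P then v e else 0)"

definition supp_in :: "(nat \<times> nat) set \<Rightarrow> (nat \<times> nat \<Rightarrow> real) \<Rightarrow> bool" where
  "supp_in P d = (\<forall>e. e \<notin> P \<longrightarrow> d e = 0)"

definition ip :: "(nat \<times> nat) set \<Rightarrow> (nat \<times> nat \<Rightarrow> real) \<Rightarrow> (nat \<times> nat \<Rightarrow> real) \<Rightarrow> real" where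
  "ip P y d = (\<Sum>e\<in>P. y e * d e)"

lemma ip_sub: "ip P (\<lambda>e. b e - c * y e) d = ip P b d - c * ip P y d"
  by (simp add: ip_def left_diff_distrib sum_subtractf sum_distrib_left mult.assoc)

lemma ip_lin: "ip P b (\<lambda>e. d e - c * d0 e) = ip P b d - c * ip P b d0"
  by (simp add: ip_def right_diff_distrib sum_subtractf sum_distrib_left algebra_simps)

lemma alg:
  assumes "finite P"
  shows "(\<And>d. supp_in P d \<Longrightarrow> (\<forall>y\<in>set ys. ip P y d = 0) \<Longrightarrow> ip P b d = 0)
     \<Longrightarrow> restr P b \<in> fv.span (restr P ` set ys)"
proof (induction ys arbitrary: b)
  case Nil
  have "supp_in P (restr P b)" by (simp add: supp_in_def restr_def)
  then have "ip P b (restr P b) = 0" using Nil by simp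
  then have "(\<Sum>e\<in>P. (b e)^2) = 0" by (simp add: ip_def restr_def power2_eq_square)
  then have "\<forall>e\<in>P. (b e)^2 = 0" using assms by (simp add: sum_nonneg_eq_0_iff)
  then have "restr P b = 0" by (auto simp: restr_def fun_eq_iff)
  then show ?case using fv.span_zero by metis
next
  case (Cons y ys)
  show ?case
  proof (cases "\<exists>d0. supp_in P d0 \<and> (\<forall>z\<in>set ys. ip P z d0 = 0) \<and> ip P y d0 \<noteq> 0")
    case True
    then obtain d0 where d0: "supp_in P d0" "\<forall>z\<in>set ys. ip P z d0 = 0" "ip P y d0 \<noteq> 0" by blast
    define \<beta> where "\<beta> = ip P b d0 / ip P y d0"
    define b' where "b' = (\<lambda>e. b e - \<beta> * y e)"
    have "restr P b' \<in> fv.span (restr P ` set ys)"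
    proof (rule Cons.IH)
      fix d assume d: "supp_in P d" "\<forall>z\<in>set ys. ip P z d = 0"
      define c where "c = ip P y d / ip P y d0"
      define d1 where "d1 = (\<lambda>e. d e - c * d0 e)"
      have "supp_in P d1" using d(1) d0(1) by (simp add: supp_in_def d1_def)
      moreover have "\<forall>z\<in>set (y#ys). ip P z d1 = 0"
      proof
        fix z assume z: "z \<in> set (y#ys)"
        have e: "ip P z d1 = ip P z d - c * ip P z d0" unfolding d1_def by (rule ip_lin)
        show "ip P z d1 = 0"
        proof (cases "z = y")
          case True
          then show ?thesis using e d0(3) by (simp add: c_def)
        next
          case False
          then show ?thesis using e z d(2) d0(2) by simp
        qed
      qed
      ultimately have "ip P b d1 = 0" using Cons.prems by blast
      then have "ip P b d = c * ip P b d0" unfolding d1_def ip_lin by simp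
      moreover have "ip P b' d = ip P b d - \<beta> * ip P y d" unfolding b'_def by (rule ip_sub)
      ultimately show "ip P b' d = 0" using d0(3)
        by (simp add: c_def \<beta>_def field_simps)
    qed
    then have A: "restr P b' \<in> fv.span (restr P ` set (y#ys))"
      using fv.span_mono[of "restr P ` set ys" "restr P ` set (y#ys)"] by auto
    have B: "fsc \<beta> (restr P y) \<in> fv.span (restr P ` set (y#ys))"
      by (intro fv.span_scale fv.span_base) simp
    have "restr P b = restr P b' + fsc \<beta> (restr P y)"
      by (auto simp: restr_def b'_def fun_eq_iff)
    then show ?thesis using fv.span_add[OF A B] by metis
  next
    case False
    have "restr P b \<in> fv.span (restr P ` set ys)"
    proof (rule Cons.IH)
      fix d assume d: "supp_in P d" "\<forall>z\<in>set ys. ip P z d = 0"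
      then have "ip P y d = 0" using False by blast
      then show "ip P b d = 0" using d Cons.prems by simp
    qed
    then show ?thesis using fv.span_mono[of "restr P ` set ys" "restr P ` set (y#ys)"] by auto
  qed
qed

primrec qs :: "nat \<Rightarrow> qtree \<Rightarrow> (nat \<times> nat \<Rightarrow> real) \<Rightarrow> (nat \<times> nat \<Rightarrow> real) list" where
  "qs n (Leaf r) w = []"
| "qs n (Query x f) w = x # qs n (f (inner_w n x w)) w"

lemma qs_len: "length (qs n A w) = num_queries n A w"
  by (induction A) auto

lemma qs_run: "(\<forall>x\<in>set (qs n A w). inner_w n x w' = inner_w n x w) \<Longrightarrow> run_out n A w' = run_out n A w"
  by (induction A) auto

definition cross :: "nat \<Rightarrow> nat set \<Rightarrow> (nat \<times> nat) set" where
  "cross n X = {(i, j) \<in> pairs n. (i \<in> X) \<noteq> (j \<in> X)}"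

lemma finite_pairs: "finite (pairs n)"
proof -
  have "pairs n \<subseteq> {..<n} \<times> {..<n}" by (auto simp: pairs_def)
  then show ?thesis by (rule finite_subset) auto
qed

lemma cut_cross: "cut n v X = {e \<in> cross n X. v e > 0}"
  by (auto simp: cut_def cross_def edges_def)

lemma cut_weight_cross:
  assumes "v \<in> wgraphs n"
  shows "cut_weight n v X = (\<Sum>e\<in>cross n X. v e)"
proof -
  have fin: "finite (cross n X)" using finite_pairs by (rule finite_subset[rotated]) (auto simp: cross_def)
  show ?thesis unfolding cut_weight_def cut_cross
  proof (rule sum.mono_neutral_left[OF fin])
    show "\<forall>i\<in>cross n X - {e \<in> cross n X. 0 < v e}. v i = 0"
      using assms by (auto simp: wgraphs_def cross_def)
  qed blast
qed

lemma finite_vsets: "finite (vsets n)"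
  by (rule finite_subset[of _ "Pow {..<n}"]) (auto simp: vsets_def)

lemma key:
  assumes w: "w \<in> wgraphs n" and A: "correct_mincut n A"
  shows "cdim n w \<le> num_queries n A w"
proof (rule ccontr)
  assume lt: "\<not> cdim n w \<le> num_queries n A w"
  define xs where "xs = qs n A w"
  define E where "E = edges n w"
  have Ep: "E \<subseteq> pairs n" by (auto simp: E_def edges_def)
  have finE: "finite E" using finite_pairs Ep by (rule finite_subset[rotated])
  have "\<exists>S\<in>min_cuts n w. restr E (chi S) \<notin> fv.span (restr E ` set xs)"
  proof (rule ccontr)
    assume "\<not> ?thesis"
    then have sub: "\<forall>S\<in>min_cuts n w. restr E (chi S) \<in> fv.span (restr E ` set xs)" by blast
    have "chi ` min_cuts n w \<subseteq> fv.span (restr E ` set xs)"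
    proof
      fix v assume "v \<in> chi ` min_cuts n w"
      then obtain S where S: "S \<in> min_cuts n w" "v = chi S" by blast
      have "S \<subseteq> E" using S(1) by (auto simp: min_cuts_def cut_def E_def)
      then have "restr E (chi S) = chi S" by (auto simp: restr_def chi_def fun_eq_iff)
      then show "v \<in> fv.span (restr E ` set xs)" using sub S by metis
    qed
    then have "fv.dim (chi ` min_cuts n w) \<le> card (restr E ` set xs)"
      by (rule fv.dim_le_card) simp
    also have "\<dots> \<le> length xs" by (metis card_image_le card_length finite_set le_trans)
    finally have "cdim n w \<le> num_queries n A w" by (simp add: cdim_def xs_def qs_len)
    then show False using lt by simp
  qed
  then obtain S where S: "S \<in> min_cuts n w" "restr E (chi S) \<notin> fv.span (restr E ` set xs)" by blast
  obtain d0 where d0: "supp_in E d0" "\<forall>y\<in>set xs. ip E y d0 = 0" "ip E (chi S) d0 \<noteq> 0"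
    using alg[OF finE, of xs "chi S"] S(2) by blast
  have neg: "ip P y (\<lambda>e. - d e) = - ip P y d" for P y d by (simp add: ip_def sum_negf)
  obtain d where d: "supp_in E d" "\<forall>y\<in>set xs. ip E y d = 0" "ip E (chi S) d < 0"
  proof (cases "ip E (chi S) d0 < 0")
    case True then show ?thesis using that d0 by blast
  next
    case False
    have "supp_in E (\<lambda>e. - d0 e)" using d0(1) by (simp add: supp_in_def)
    moreover have "\<forall>y\<in>set xs. ip E y (\<lambda>e. - d0 e) = 0" using d0(2) neg by simp
    moreover have "ip E (chi S) (\<lambda>e. - d0 e) < 0" using False d0(3) neg by simp
    ultimately show ?thesis using that by blast
  qed
  have wpos: "\<forall>e\<in>E. w e > 0" by (simp add: E_def edges_def)
  have ev: "eventually (\<lambda>t. \<forall>e\<in>E. w e + t * d e > 0) (at_right 0)"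
  proof (rule eventually_ball_finite[OF finE], rule ballI)
    fix e assume e: "e \<in> E"
    have "((\<lambda>t. w e + t * d e) \<longlongrightarrow> w e + 0 * d e) (at_right 0)"
      by (intro tendsto_intros)
    then have "((\<lambda>t. w e + t * d e) \<longlongrightarrow> w e) (at_right 0)" by simp
    then show "eventually (\<lambda>t. w e + t * d e > 0) (at_right (0::real))"
      using order_tendstoD(1) wpos e by blast
  qed
  then obtain b where b: "b > 0" "\<And>t. t > 0 \<Longrightarrow> t < b \<Longrightarrow> \<forall>e\<in>E. w e + t * d e > 0"
    unfolding eventually_at_right_field by auto
  define t where "t = b / 2"
  have t0: "t > 0" "t < b" using b(1) by (auto simp: t_def)
  have t: "t > 0" "\<forall>e\<in>E. w e + t * d e > 0" using t0 b(2)[OF t0] by auto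
  define w' where "w' = (\<lambda>e. w e + t * d e)"
  have dz: "e \<notin> E \<Longrightarrow> d e = 0" for e using d(1) unfolding supp_in_def by blast
  have w'g: "w' \<in> wgraphs n"
  proof -
    have "0 \<le> w' e" if "e \<in> pairs n" for e
    proof (cases "e \<in> E")
      case True then show ?thesis using t(2) by (auto simp: w'_def)
    next
      case False then show ?thesis using w that dz by (auto simp: w'_def wgraphs_def)
    qed
    moreover have "w' e = 0" if "e \<notin> pairs n" for e
    proof -
      have "w e = 0" using that w unfolding wgraphs_def by blast
      moreover have "d e = 0" using that Ep dz by blast
      ultimately show ?thesis by (simp add: w'_def)
    qed
    ultimately show ?thesis by (simp add: wgraphs_def)
  qed
  have inner_d: "inner_w n x d = ip E x d" for x
    unfolding inner_w_def ip_def
    by (rule sum.mono_neutral_right[OF finite_pairs Ep]) (auto simp: dz)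
  have "inner_w n x w' = inner_w n x w + t * inner_w n x d" for x
    by (simp add: inner_w_def w'_def distrib_left sum.distrib sum_distrib_left algebra_simps)
  then have "\<forall>x\<in>set (qs n A w). inner_w n x w' = inner_w n x w"
    using d(2) inner_d by (simp add: xs_def)
  then have "run_out n A w' = run_out n A w" by (rule qs_run)
  then have eq: "mincut n w' = mincut n w" using A w w'g by (simp add: correct_mincut_def)
  obtain X where X: "S = cut n w X" "X \<in> vsets n" "cut_weight n w X = mincut n w"
    using S(1) by (auto simp: min_cuts_def)
  have finC: "finite (cross n X)" using finite_pairs by (rule finite_subset[rotated]) (auto simp: cross_def)
  have SC: "S = cross n X \<inter> E" using X(1) by (auto simp: cut_cross E_def edges_def cross_def)
  have "(\<Sum>e\<in>cross n X. d e) = (\<Sum>e\<in>S. d e)"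
    by (rule sum.mono_neutral_right[OF finC]) (auto simp: SC dz)
  also have "\<dots> = ip E (chi S) d"
  proof -
    have "(\<Sum>e\<in>E. chi S e * d e) = (\<Sum>e\<in>E \<inter> S. d e)"
    proof -
      have "(\<lambda>e. chi S e * d e) = (\<lambda>e. if e \<in> S then d e else 0)" by (auto simp: chi_def fun_eq_iff)
      then show ?thesis using sum.inter_restrict[OF finE, of d S] by metis
    qed
    also have "E \<inter> S = S" using SC by blast
    finally show ?thesis by (simp add: ip_def)
  qed
  finally have sd: "(\<Sum>e\<in>cross n X. d e) = ip E (chi S) d" .
  have "cut_weight n w' X = cut_weight n w X + t * ip E (chi S) d"
    using cut_weight_cross[OF w'g] cut_weight_cross[OF w] sd
      sum_distrib_left[of t d "cross n X", symmetric]
    by (simp add: w'_def sum.distrib)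
  also have "\<dots> < mincut n w" using X(3) t(1) d(3) by (simp add: mult_pos_neg)
  finally have "cut_weight n w' X < mincut n w" .
  moreover have "mincut n w' \<le> cut_weight n w' X"
    unfolding mincut_def using finite_vsets X(2) by (intro Min_le) auto
  ultimately show False using eq by simp
qed

theorem corollary6:
  fixes n k :: nat and w :: "nat \<times> nat \<Rightarrow> real"
  assumes "w \<in> wgraphs n"
    and "cdim n w = k"
  shows "D_lin_mincut n \<ge> enat k"
  unfolding D_lin_mincut_def
proof (rule INF_greatest)
  fix A assume "A \<in> {A. correct_mincut n A}"
  then have "k \<le> num_queries n A w" using key assms by auto
  then have "enat k \<le> enat (num_queries n A w)" by simp
  also have "\<dots> \<le> (SUP w \<in> wgraphs n. enat (num_queries n A w))"
    using assms(1) by (rule SUP_upper)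
  finally show "enat k \<le> (SUP w \<in> wgraphs n. enat (num_queries n A w))" .
qed

end
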